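(* Let $2\le n\le m$ be integers and let $T_{n,m}=C_n\,\Box\, C_m$. Then $T_{n,m}$ is a connected highly-regular graph, and it is not distance-regular unless $(n,m)\in\{(2,2),(2,4),(3,3),(4,4)\}$.
   Context: For $n\ge3$, $C_n$ is the cycle graph on $n$ vertices; $C_2$ denotes the graph with two vertices joined by a single edge. The Cartesian product $\Gamma_1\Box\Gamma_2$ has vertex set $V(\Gamma_1)\times V(\Gamma_2)$, with $(u_1,v_1)\sim(u_2,v_2)$ iff ($u_1=u_2$ and $v_1\sim v_2$) or ($v_1=v_2$ and $u_1\sim u_2$). A graph $\Gamma$ of order $N$ is highly-regular with collapsed adjacency matrix $C=[c_{i,j}]_{1\le i,j\le M}$, where $2\le M<N$ (the value $M=N$ allowed only when $N=2$), if for every vertex $u$ there is a partition of $V(\Gamma)$ into nonempty sets $V_1(u)=\{u\},\dots,V_M(u)$ such that every $y\in V_j(u)$ is adjacent to exactly $c_{i,j}$ vertices of $V_i(u)$. A connected graph is distance-regular if for all $u,v$ the numbers $|D_1(v)\cap D_{i-1}(u)|$, $|D_1(v)\cap D_i(u)|$, $|D_1(v)\cap D_{i+1}(u)|$ depend only on $i=d(u,v)$, where $D_i(u)=\{v:d(u,v)=i\}$. *)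

theory Defs
  imports Main
begin

text \<open>A (simple) graph is given by a vertex set V and a symmetric, irreflexive
adjacency relation E.\<close>

definition cycle_adj :: "nat \<Rightarrow> nat \<Rightarrow> nat \<Rightarrow> bool" where
  "cycle_adj n i j \<longleftrightarrow> i < n \<and> j < n \<and> i \<noteq> j \<and>
     (j = (i + 1) mod n \<or> i = (j + 1) mod n)"

definition cycle_verts :: "nat \<Rightarrow> nat set" where
  "cycle_verts n = {..<n}"

definition box_verts :: "'a set \<Rightarrow> 'b set \<Rightarrow> ('a \<times> 'b) set" where
  "box_verts V1 V2 = V1 \<times> V2"

definition box_adj :: "('a \<Rightarrow> 'a \<Rightarrow> bool) \<Rightarrow> ('b \<Rightarrow> 'b \<Rightarrow> bool) \<Rightarrow>
    ('a \<times> 'b) \<Rightarrow> ('a \<times> 'b) \<Rightarrow> bool" where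
  "box_adj E1 E2 p q \<longleftrightarrow>
     (fst p = fst q \<and> E2 (snd p) (snd q)) \<or> (snd p = snd q \<and> E1 (fst p) (fst q))"

definition torus_verts :: "nat \<Rightarrow> nat \<Rightarrow> (nat \<times> nat) set" where
  "torus_verts n m = box_verts (cycle_verts n) (cycle_verts m)"

definition torus_adj :: "nat \<Rightarrow> nat \<Rightarrow> (nat \<times> nat) \<Rightarrow> (nat \<times> nat) \<Rightarrow> bool" where
  "torus_adj n m = box_adj (cycle_adj n) (cycle_adj m)"

definition is_walk :: "'a set \<Rightarrow> ('a \<Rightarrow> 'a \<Rightarrow> bool) \<Rightarrow> 'a list \<Rightarrow> bool" where
  "is_walk V E xs \<longleftrightarrow> xs \<noteq> [] \<and> set xs \<subseteq> V \<and>
     (\<forall>i. Suc i < length xs \<longrightarrow> E (xs ! i) (xs ! Suc i))"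

definition reachable :: "'a set \<Rightarrow> ('a \<Rightarrow> 'a \<Rightarrow> bool) \<Rightarrow> 'a \<Rightarrow> 'a \<Rightarrow> bool" where
  "reachable V E u v \<longleftrightarrow> (\<exists>xs. is_walk V E xs \<and> hd xs = u \<and> last xs = v)"

definition connected_graph :: "'a set \<Rightarrow> ('a \<Rightarrow> 'a \<Rightarrow> bool) \<Rightarrow> bool" where
  "connected_graph V E \<longleftrightarrow> V \<noteq> {} \<and> (\<forall>u\<in>V. \<forall>v\<in>V. reachable V E u v)"

definition gdist :: "'a set \<Rightarrow> ('a \<Rightarrow> 'a \<Rightarrow> bool) \<Rightarrow> 'a \<Rightarrow> 'a \<Rightarrow> nat" where
  "gdist V E u v = (LEAST k. \<exists>xs. is_walk V E xs \<and> hd xs = u \<and> last xs = v \<and> length xs = Suc k)"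

text \<open>Highly-regular with some collapsed adjacency matrix C = [c i j], 1 \<le> i,j \<le> M.\<close>
definition highly_regular :: "'a set \<Rightarrow> ('a \<Rightarrow> 'a \<Rightarrow> bool) \<Rightarrow> bool" where
  "highly_regular V E \<longleftrightarrow> finite V \<and>
     (\<exists>(M::nat) (c::nat \<Rightarrow> nat \<Rightarrow> nat).
        2 \<le> M \<and> (M < card V \<or> (M = card V \<and> card V = 2)) \<and>
        (\<forall>u\<in>V. \<exists>P :: nat \<Rightarrow> 'a set.
            P 1 = {u} \<and>
            (\<forall>i\<in>{1..M}. P i \<noteq> {} \<and> P i \<subseteq> V) \<and>
            (\<forall>i\<in>{1..M}. \<forall>j\<in>{1..M}. i \<noteq> j \<longrightarrow> P i \<inter> P j = {}) \<and>
            (\<Union>i\<in>{1..M}. P i) = V \<and>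
            (\<forall>i\<in>{1..M}. \<forall>j\<in>{1..M}. \<forall>y\<in>P j. card {x \<in> P i. E y x} = c i j)))"

definition distance_regular :: "'a set \<Rightarrow> ('a \<Rightarrow> 'a \<Rightarrow> bool) \<Rightarrow> bool" where
  "distance_regular V E \<longleftrightarrow> connected_graph V E \<and>
     (\<forall>u\<in>V. \<forall>v\<in>V. \<forall>u'\<in>V. \<forall>v'\<in>V. gdist V E u v = gdist V E u' v' \<longrightarrow>
        card {w\<in>V. E v w \<and> gdist V E u w + 1 = gdist V E u v}
          = card {w\<in>V. E v' w \<and> gdist V E u' w + 1 = gdist V E u' v'} \<and>
        card {w\<in>V. E v w \<and> gdist V E u w = gdist V E u v}
          = card {w\<in>V. E v' w \<and> gdist V E u' w = gdist V E u' v'} \<and>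
        card {w\<in>V. E v w \<and> gdist V E u w = gdist V E u v + 1}
          = card {w\<in>V. E v' w \<and> gdist V E u' w = gdist V E u' v' + 1})"

end

theory Submission
  imports Defs
begin



definition cd :: "nat \<Rightarrow> nat \<Rightarrow> nat \<Rightarrow> nat" where
  "cd n c x = (if c \<le> x then min (x - c) (n - (x - c)) else min (c - x) (n - (c - x)))"

definition sc :: "nat \<Rightarrow> nat \<Rightarrow> nat" where "sc n i = (if i + 1 = n then 0 else i + 1)"

lemma sc_mod: "i < n \<Longrightarrow> (i + 1) mod n = sc n i"
  unfolding sc_def by (simp add: mod_if)

lemma adj_sc: "cycle_adj n i j \<longleftrightarrow> i < n \<and> j < n \<and> i \<noteq> j \<and> (j = sc n i \<or> i = sc n j)"
  unfolding cycle_adj_def using sc_mod by auto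

lemma sc_lt: "i < n \<Longrightarrow> sc n i < n" unfolding sc_def by simp

lemma cd_sym: "cd n c x = cd n x c"
  unfolding cd_def by auto

definition tr :: "nat \<Rightarrow> nat \<Rightarrow> nat \<Rightarrow> nat" where "tr n c x = (if c \<le> x then x - c else x + n - c)"
definition tri :: "nat \<Rightarrow> nat \<Rightarrow> nat \<Rightarrow> nat" where "tri n c x = (if x + c < n then x + c else x + c - n)"
definition fl :: "nat \<Rightarrow> nat \<Rightarrow> nat \<Rightarrow> nat" where "fl n c x = (if x \<le> c then c - x else c + n - x)"

lemma cd0: "x < n \<Longrightarrow> cd n 0 x = min x (n - x)" unfolding cd_def by simp

lemma cd_tr: "c < n \<Longrightarrow> x < n \<Longrightarrow> cd n 0 (tr n c x) = cd n c x"
proof (cases "c \<le> x")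
  case False
  assume "c < n" "x < n"
  hence e: "x + n - c = n - (c - x)" "n - (n - (c - x)) = c - x" using False by arith+
  show ?thesis using False unfolding tr_def cd_def by (simp add: e min.commute)
qed (simp add: tr_def cd_def)
lemma cd_fl: "c < n \<Longrightarrow> x < n \<Longrightarrow> cd n 0 (fl n c x) = cd n c x"
proof (cases "x \<le> c")
  case False
  assume "c < n" "x < n"
  hence e: "c + n - x = n - (x - c)" "n - (n - (x - c)) = x - c" using False by arith+
  show ?thesis using False unfolding fl_def cd_def by (simp add: e min.commute)
next
  case True
  thus ?thesis unfolding fl_def cd_def by auto
qed
lemma tr_lt: "c < n \<Longrightarrow> x < n \<Longrightarrow> tr n c x < n" unfolding tr_def by auto
lemma tri_lt: "c < n \<Longrightarrow> x < n \<Longrightarrow> tri n c x < n" unfolding tri_def by auto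
lemma fl_lt: "c < n \<Longrightarrow> x < n \<Longrightarrow> fl n c x < n" unfolding fl_def by auto
lemma tri_tr: "c < n \<Longrightarrow> x < n \<Longrightarrow> tri n c (tr n c x) = x" unfolding tr_def tri_def by auto
lemma tr_tri: "c < n \<Longrightarrow> x < n \<Longrightarrow> tr n c (tri n c x) = x" unfolding tr_def tri_def by auto
lemma fl_fl: "c < n \<Longrightarrow> x < n \<Longrightarrow> fl n c (fl n c x) = x" unfolding fl_def by auto
lemma tr_sc: "c < n \<Longrightarrow> x < n \<Longrightarrow> tr n c (sc n x) = sc n (tr n c x)" unfolding tr_def sc_def by auto
lemma tri_sc: "c < n \<Longrightarrow> x < n \<Longrightarrow> tri n c (sc n x) = sc n (tri n c x)" unfolding tri_def sc_def by auto
lemma fl_sc: "c < n \<Longrightarrow> x < n \<Longrightarrow> sc n (fl n c (sc n x)) = fl n c x" unfolding fl_def sc_def by auto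

lemma cd_sc0: "x < n \<Longrightarrow> cd n 0 (sc n x) \<le> cd n 0 x + 1 \<and> cd n 0 x \<le> cd n 0 (sc n x) + 1"
  using sc_lt[of x n] unfolding cd0[OF sc_lt] by (simp add: cd0 sc_def min_def) arith

lemma cd_sc: "c < n \<Longrightarrow> x < n \<Longrightarrow> cd n c (sc n x) \<le> cd n c x + 1 \<and> cd n c x \<le> cd n c (sc n x) + 1"
  using cd_sc0[of "tr n c x" n] cd_tr[of c n x] cd_tr[of c n "sc n x"] tr_sc[of c n x] tr_lt sc_lt
  by metis

lemma cd_adj: "cycle_adj n i j \<Longrightarrow> c < n \<Longrightarrow> cd n c i \<le> cd n c j + 1"
  unfolding adj_sc using cd_sc by metis

lemma cd_zero: "c < n \<Longrightarrow> x < n \<Longrightarrow> cd n c x = 0 \<longleftrightarrow> x = c"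
  unfolding cd_def by (cases "c \<le> x") (auto simp: min_def)

lemma cd_bound: "c < n \<Longrightarrow> x < n \<Longrightarrow> cd n c x \<le> n div 2"
  unfolding cd_def by (cases "c \<le> x") (auto simp: min_def)

lemma cd_surj: "c < n \<Longrightarrow> a \<le> n div 2 \<Longrightarrow>
   cd n c (if c + a < n then c + a else c + a - n) = a"
  unfolding cd_def by (cases "c + a < n") (auto simp: min_def)

definition pd :: "nat \<Rightarrow> nat \<Rightarrow> nat" where "pd n x = (if x = 0 then n - 1 else x - 1)"

lemma cd_desc0: "2 \<le> n \<Longrightarrow> x < n \<Longrightarrow> 0 < cd n 0 x \<Longrightarrow>
   (sc n x < n \<and> cd n 0 (sc n x) + 1 = cd n 0 x) \<or> (pd n x < n \<and> x = sc n (pd n x) \<and> cd n 0 (pd n x) + 1 = cd n 0 x)"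
proof -
  assume h: "2 \<le> n" "x < n" "0 < cd n 0 x"
  have "sc n x < n" "pd n x < n" using h unfolding sc_def pd_def by auto
  thus ?thesis using h unfolding cd0[OF h(2)] cd0[OF \<open>sc n x < n\<close>] cd0[OF \<open>pd n x < n\<close>]
    unfolding sc_def pd_def by (cases "x \<le> n - x") (auto simp: min_def)
qed

lemma cd_desc: "2 \<le> n \<Longrightarrow> c < n \<Longrightarrow> x < n \<Longrightarrow> 0 < cd n c x \<Longrightarrow>
   \<exists>y<n. cycle_adj n x y \<and> cd n c y + 1 = cd n c x"
proof -
  assume h: "2 \<le> n" "c < n" "x < n" "0 < cd n c x"
  let ?x = "tr n c x"
  have x0: "?x < n" "0 < cd n 0 ?x" using h cd_tr tr_lt by auto
  have ne: "\<And>z. z < n \<Longrightarrow> sc n z \<noteq> z" using h unfolding sc_def by auto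
  from cd_desc0[OF h(1) x0]
  show ?thesis
  proof
    assume a: "sc n ?x < n \<and> cd n 0 (sc n ?x) + 1 = cd n 0 ?x"
    let ?y = "tri n c (sc n ?x)"
    have "?y < n" using a h tri_lt by auto
    moreover have "?y = sc n x" using tri_sc[of c n ?x] tri_tr h tr_lt by simp
    moreover have "cd n c ?y = cd n 0 (sc n ?x)"
      using cd_tr[of c n ?y] tr_tri a h by (metis \<open>?y < n\<close>)
    ultimately show ?thesis using a h x0 ne unfolding adj_sc cd_tr[OF h(2,3)]
      by (metis cd_tr h(2) h(3))
  next
    assume a: "pd n ?x < n \<and> ?x = sc n (pd n ?x) \<and> cd n 0 (pd n ?x) + 1 = cd n 0 ?x"
    let ?y = "tri n c (pd n ?x)"
    have yl: "?y < n" using a h tri_lt by auto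
    have "sc n ?y = x" using tri_sc[of c n "pd n ?x"] a h tri_tr by metis
    moreover have "cd n c ?y = cd n 0 (pd n ?x)"
      using cd_tr[of c n ?y] tr_tri a h yl by metis
    ultimately show ?thesis using a h yl ne unfolding adj_sc
      by (metis cd_tr h(2) h(3))
  qed
qed

definition good where "good n c f g \<longleftrightarrow>
  (\<forall>x<n. f x < n \<and> g x < n \<and> g (f x) = x \<and> f (g x) = x \<and> cd n 0 (f x) = cd n c x) \<and>
  (\<forall>i j. cycle_adj n i j \<longrightarrow> cycle_adj n (f i) (f j)) \<and>
  (\<forall>i j. cycle_adj n i j \<longrightarrow> cycle_adj n (g i) (g j))"

lemma inj_adj:
  assumes "\<And>x. x < n \<Longrightarrow> f x < n" "\<And>x y. x < n \<Longrightarrow> y < n \<Longrightarrow> f x = f y \<Longrightarrow> x = y"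
    "\<And>x. x < n \<Longrightarrow> f (sc n x) = sc n (f x)"
  shows "cycle_adj n i j \<Longrightarrow> cycle_adj n (f i) (f j)"
  unfolding adj_sc using assms by metis

lemma inj_adj2:
  assumes "\<And>x. x < n \<Longrightarrow> f x < n" "\<And>x y. x < n \<Longrightarrow> y < n \<Longrightarrow> f x = f y \<Longrightarrow> x = y"
    "\<And>x. x < n \<Longrightarrow> sc n (f (sc n x)) = f x"
  shows "cycle_adj n i j \<Longrightarrow> cycle_adj n (f i) (f j)"
  unfolding adj_sc using assms by (metis sc_lt)

lemma good_tr: "c < n \<Longrightarrow> good n c (tr n c) (tri n c)"
  unfolding good_def
proof (intro conjI allI impI)
  fix x assume "c < n" "x < n"
  thus "tr n c x < n" "tri n c x < n" "tri n c (tr n c x) = x" "tr n c (tri n c x) = x"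
     "cd n 0 (tr n c x) = cd n c x"
    using tr_lt tri_lt tri_tr tr_tri cd_tr by auto
next
  fix i j assume c: "c < n" and a: "cycle_adj n i j"
  show "cycle_adj n (tr n c i) (tr n c j)"
    by (rule inj_adj[OF _ _ _ a]) (use c tr_lt tr_sc tri_tr in metis)+
  show "cycle_adj n (tri n c i) (tri n c j)"
    by (rule inj_adj[OF _ _ _ a]) (use c tri_lt tri_sc tr_tri in metis)+
qed

lemma good_fl: "c < n \<Longrightarrow> good n c (fl n c) (fl n c)"
  unfolding good_def
proof (intro conjI allI impI)
  fix x assume "c < n" "x < n"
  thus "fl n c x < n" "fl n c x < n" "fl n c (fl n c x) = x" "fl n c (fl n c x) = x"
     "cd n 0 (fl n c x) = cd n c x"
    using fl_lt fl_fl cd_fl by auto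
next
  fix i j assume c: "c < n" and a: "cycle_adj n i j"
  show "cycle_adj n (fl n c i) (fl n c j)" "cycle_adj n (fl n c i) (fl n c j)"
    by (rule inj_adj2[OF _ _ _ a]; use c fl_lt fl_sc fl_fl in metis)+
qed

lemma good_ex: "c < n \<Longrightarrow> x < n \<Longrightarrow> x' < n \<Longrightarrow> cd n 0 x' = cd n c x \<Longrightarrow>
   \<exists>f g. good n c f g \<and> f x = x'"
proof -
  assume h: "c < n" "x < n" "x' < n" "cd n 0 x' = cd n c x"
  have "x' = tr n c x \<or> x' = fl n c x"
    using h unfolding tr_def fl_def cd_def by (cases "c \<le> x") (auto simp: min_def split: if_splits)
  thus ?thesis using good_tr good_fl h by blast
qed



lemma is_walk_single: "is_walk V E [x] \<longleftrightarrow> x \<in> V"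
  unfolding is_walk_def by auto

lemma is_walk_Cons2: "is_walk V E (x # y # xs) \<longleftrightarrow> x \<in> V \<and> E x y \<and> is_walk V E (y # xs)"
  unfolding is_walk_def
proof safe
  fix i assume "\<forall>i. Suc i < length (x # y # xs) \<longrightarrow> E ((x # y # xs) ! i) ((x # y # xs) ! Suc i)"
    "Suc i < length (y # xs)"
  thus "E ((y # xs) ! i) ((y # xs) ! Suc i)" by (metis length_Cons nth_Cons_Suc Suc_less_eq)
next
  fix i assume a: "E x y" "\<forall>i. Suc i < length (y # xs) \<longrightarrow> E ((y # xs) ! i) ((y # xs) ! Suc i)"
    "Suc i < length (x # y # xs)"
  thus "E ((x # y # xs) ! i) ((x # y # xs) ! Suc i)"
    by (cases i) auto
qed auto

abbreviation V where "V n m \<equiv> torus_verts n m"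
abbreviation A where "A n m \<equiv> torus_adj n m"

definition DD :: "nat \<Rightarrow> nat \<Rightarrow> nat \<times> nat \<Rightarrow> nat \<times> nat \<Rightarrow> nat" where
  "DD n m u x = cd n (fst u) (fst x) + cd m (snd u) (snd x)"

lemma V_iff: "p \<in> V n m \<longleftrightarrow> fst p < n \<and> snd p < m"
  unfolding torus_verts_def box_verts_def cycle_verts_def by (cases p) auto

lemma A_iff: "A n m p q \<longleftrightarrow> (fst p = fst q \<and> cycle_adj m (snd p) (snd q)) \<or>
    (snd p = snd q \<and> cycle_adj n (fst p) (fst q))"
  unfolding torus_adj_def box_adj_def by simp

lemma DD_adj: "c \<in> V n m \<Longrightarrow> A n m p q \<Longrightarrow> DD n m c p \<le> DD n m c q + 1"
  unfolding A_iff DD_def V_iff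
proof (elim disjE conjE)
  assume "fst c < n" "snd c < m" "fst p = fst q" "cycle_adj m (snd p) (snd q)"
  thus "cd n (fst c) (fst p) + cd m (snd c) (snd p) \<le> cd n (fst c) (fst q) + cd m (snd c) (snd q) + 1"
    using cd_adj[of m "snd p" "snd q" "snd c"] by simp
next
  assume "fst c < n" "snd c < m" "snd p = snd q" "cycle_adj n (fst p) (fst q)"
  thus "cd n (fst c) (fst p) + cd m (snd c) (snd p) \<le> cd n (fst c) (fst q) + cd m (snd c) (snd q) + 1"
    using cd_adj[of n "fst p" "fst q" "fst c"] by simp
qed

lemma walk_lower: "c \<in> V n m \<Longrightarrow> is_walk (V n m) (A n m) xs \<Longrightarrow> DD n m c (hd xs) \<le> DD n m c (last xs) + (length xs - 1)"
proof (induction xs rule: induct_list012)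
  case (3 x y zs)
  have w: "is_walk (V n m) (A n m) (y # zs)" "A n m x y" using 3(4) by (simp_all add: is_walk_Cons2)
  have "DD n m c y \<le> DD n m c (last (y # zs)) + (length (y # zs) - 1)"
    using 3(2)[OF 3(3) w(1)] by simp
  moreover have "DD n m c x \<le> DD n m c y + 1" using 3(3) w DD_adj by blast
  ultimately show ?case by simp
qed (auto simp: is_walk_def)

lemma walk_exists: "2 \<le> n \<Longrightarrow> 2 \<le> m \<Longrightarrow> c \<in> V n m \<Longrightarrow>
  \<forall>x \<in> V n m. DD n m c x = k \<longrightarrow>
    (\<exists>xs. is_walk (V n m) (A n m) xs \<and> hd xs = x \<and> last xs = c \<and> length xs = Suc k)"
proof (induction k)
  case 0
  show ?case
  proof (intro ballI impI)
    fix x assume "x \<in> V n m" "DD n m c x = 0"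
    hence "x = c" using 0 unfolding DD_def V_iff using cd_zero
      by (metis add_is_0 prod.collapse)
    thus "\<exists>xs. is_walk (V n m) (A n m) xs \<and> hd xs = x \<and> last xs = c \<and> length xs = Suc 0"
      using 0 by (intro exI[of _ "[c]"]) (simp add: is_walk_single)
  qed
next
  case (Suc k)
  show ?case
  proof (intro ballI impI)
    fix x assume x: "x \<in> V n m" "DD n m c x = Suc k"
    have "\<exists>y \<in> V n m. A n m x y \<and> DD n m c y = k"
    proof (cases "0 < cd n (fst c) (fst x)")
      case True
      then obtain y where "y < n" "cycle_adj n (fst x) y" "cd n (fst c) y + 1 = cd n (fst c) (fst x)"
        using cd_desc[of n "fst c" "fst x"] Suc.prems x True unfolding V_iff by blast
      thus ?thesis using x Suc.prems
        by (intro bexI[of _ "(y, snd x)"]) (auto simp: V_iff A_iff DD_def)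
    next
      case False
      hence "0 < cd m (snd c) (snd x)" using x unfolding DD_def by simp
      then obtain y where "y < m" "cycle_adj m (snd x) y" "cd m (snd c) y + 1 = cd m (snd c) (snd x)"
        using cd_desc[of m "snd c" "snd x"] Suc.prems x \<open>0 < cd m (snd c) (snd x)\<close> unfolding V_iff by blast
      thus ?thesis using x Suc.prems False
        by (intro bexI[of _ "(fst x, y)"]) (auto simp: V_iff A_iff DD_def)
    qed
    then obtain y where y: "y \<in> V n m" "A n m x y" "DD n m c y = k" by blast
    then obtain ys where ys: "is_walk (V n m) (A n m) ys" "hd ys = y" "last ys = c" "length ys = Suc k"
      using Suc by blast
    then obtain zs where "ys = y # zs" by (cases ys) auto
    thus "\<exists>xs. is_walk (V n m) (A n m) xs \<and> hd xs = x \<and> last xs = c \<and> length xs = Suc (Suc k)"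
      using ys x y by (intro exI[of _ "x # ys"]) (simp add: is_walk_Cons2)
  qed
qed

lemma gdist_eq: "2 \<le> n \<Longrightarrow> 2 \<le> m \<Longrightarrow> u \<in> V n m \<Longrightarrow> v \<in> V n m \<Longrightarrow>
   gdist (V n m) (A n m) u v = DD n m v u"
  unfolding gdist_def
proof (rule Least_equality)
  assume "2 \<le> n" "2 \<le> m" "u \<in> V n m" "v \<in> V n m"
  thus "\<exists>xs. is_walk (V n m) (A n m) xs \<and> hd xs = u \<and> last xs = v \<and> length xs = Suc (DD n m v u)"
    using walk_exists by blast
next
  fix k assume "v \<in> V n m" "\<exists>xs. is_walk (V n m) (A n m) xs \<and> hd xs = u \<and> last xs = v \<and> length xs = Suc k"
  then obtain xs where "is_walk (V n m) (A n m) xs" "hd xs = u" "last xs = v" "length xs = Suc k" by blast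
  moreover have "DD n m v v = 0" by (simp add: DD_def cd_def)
  ultimately show "DD n m v u \<le> k" using walk_lower[of v n m xs] \<open>v \<in> V n m\<close> by simp
qed

lemma connected: "2 \<le> n \<Longrightarrow> 2 \<le> m \<Longrightarrow> connected_graph (V n m) (A n m)"
  unfolding connected_graph_def reachable_def
proof safe
  assume "2 \<le> n" "2 \<le> m" "V n m = {}"
  moreover have "(0,0) \<in> V n m" using \<open>2 \<le> n\<close> \<open>2 \<le> m\<close> by (simp add: V_iff)
  ultimately show False by simp
next
  fix u v assume "2 \<le> n" "2 \<le> m" "u \<in> V n m" "v \<in> V n m"
  thus "\<exists>xs. is_walk (V n m) (A n m) xs \<and> hd xs = u \<and> last xs = v"
    using walk_exists by blast
qed



definition idx :: "nat \<Rightarrow> nat \<Rightarrow> nat \<times> nat \<Rightarrow> nat \<times> nat \<Rightarrow> nat" where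
  "idx n m u x = 1 + cd n (fst u) (fst x) + (n div 2 + 1) * cd m (snd u) (snd x)"

definition Part where "Part n m u i = {x \<in> V n m. idx n m u x = i}"

lemma radix: "(a::nat) < K \<Longrightarrow> a' < K \<Longrightarrow> a + K * b = a' + K * b' \<Longrightarrow> a = a' \<and> b = b'"
proof -
  assume h: "a < K" "a' < K" "a + K * b = a' + K * b'"
  have "(a + K * b) mod K = a" "(a' + K * b') mod K = a'" using h(1,2) by simp_all
  have aa: "a = a'" by (metis h(3) \<open>(a + K * b) mod K = a\<close> \<open>(a' + K * b') mod K = a'\<close>)
  have "K > 0" using h by simp
  thus ?thesis using h aa by simp
qed

lemma idx_eq: "u \<in> V n m \<Longrightarrow> x \<in> V n m \<Longrightarrow> u' \<in> V n m \<Longrightarrow> x' \<in> V n m \<Longrightarrow>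
   idx n m u x = idx n m u' x' \<Longrightarrow>
   cd n (fst u) (fst x) = cd n (fst u') (fst x') \<and> cd m (snd u) (snd x) = cd m (snd u') (snd x')"
  unfolding idx_def V_iff
  apply (rule radix[where K = "n div 2 + 1"])
  using cd_bound by (auto simp: less_Suc_eq_le)

lemma equitable:
  assumes u: "u \<in> V n m" and y: "y \<in> Part n m u j" and y0: "y0 \<in> Part n m (0,0) j"
  shows "card {x \<in> Part n m u i. A n m y x} = card {x \<in> Part n m (0,0) i. A n m y0 x}"
proof -
  have yV: "y \<in> V n m" and y0V: "y0 \<in> V n m" using y y0 by (auto simp: Part_def)
  have zV: "(0,0) \<in> V n m" using u by (simp add: V_iff)
  have "idx n m u y = idx n m (0,0) y0" using y y0 by (simp add: Part_def)
  from idx_eq[OF u yV zV y0V this]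
  have e1: "cd n 0 (fst y0) = cd n (fst u) (fst y)" and e2: "cd m 0 (snd y0) = cd m (snd u) (snd y)"
    by auto
  obtain f1 g1 where g1: "good n (fst u) f1 g1" "f1 (fst y) = fst y0"
    using good_ex[OF _ _ _ e1] u yV y0V by (auto simp: V_iff)
  obtain f2 g2 where g2: "good m (snd u) f2 g2" "f2 (snd y) = snd y0"
    using good_ex[OF _ _ _ e2] u yV y0V by (auto simp: V_iff)
  define s where "s = (\<lambda>p. (f1 (fst p), f2 (snd p)))"
  define t where "t = (\<lambda>p. (g1 (fst p), g2 (snd p)))"
  have sV: "\<And>p. p \<in> V n m \<Longrightarrow> s p \<in> V n m" and tV: "\<And>p. p \<in> V n m \<Longrightarrow> t p \<in> V n m"
    and ts: "\<And>p. p \<in> V n m \<Longrightarrow> t (s p) = p" and st: "\<And>p. p \<in> V n m \<Longrightarrow> s (t p) = p"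
    using g1 g2 unfolding good_def s_def t_def V_iff by auto
  have sidx: "\<And>p. p \<in> V n m \<Longrightarrow> idx n m (0,0) (s p) = idx n m u p"
    using g1 g2 unfolding good_def s_def idx_def V_iff by auto
  have tidx: "\<And>p. p \<in> V n m \<Longrightarrow> idx n m u (t p) = idx n m (0,0) p"
    using sidx tV st by metis
  have sA: "\<And>p q. A n m p q \<Longrightarrow> A n m (s p) (s q)"
    using g1 g2 unfolding good_def s_def A_iff by auto
  have tA: "\<And>p q. A n m p q \<Longrightarrow> A n m (t p) (t q)"
    using g1 g2 unfolding good_def t_def A_iff by auto
  have sy: "s y = y0" using g1 g2 unfolding s_def by simp
  have ty: "t y0 = y" using ts[OF yV] sy by simp
  have img: "s ` {x \<in> Part n m u i. A n m y x} = {x \<in> Part n m (0,0) i. A n m y0 x}"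
  proof (intro equalityI subsetI)
    fix z assume "z \<in> s ` {x \<in> Part n m u i. A n m y x}"
    then obtain x where z: "z = s x" "x \<in> Part n m u i" "A n m y x" by blast
    have "s x \<in> Part n m (0,0) i" using z sV sidx by (auto simp: Part_def)
    moreover have "A n m y0 (s x)" using sA[OF \<open>A n m y x\<close>] sy by simp
    ultimately show "z \<in> {x \<in> Part n m (0,0) i. A n m y0 x}" using z by simp
  next
    fix x assume "x \<in> {x \<in> Part n m (0,0) i. A n m y0 x}"
    hence x: "x \<in> Part n m (0,0) i" "A n m y0 x" by auto
    hence xV: "x \<in> V n m" by (simp add: Part_def)
    have "A n m y (t x)" using tA[OF x(2)] ty by simp
    hence "t x \<in> {x \<in> Part n m u i. A n m y x}"
      using x xV tV tidx by (auto simp: Part_def)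
    thus "x \<in> s ` {x \<in> Part n m u i. A n m y x}" using st[OF xV] by (metis image_eqI)
  qed
  have "inj_on s {x \<in> Part n m u i. A n m y x}"
    by (rule inj_on_inverseI[where g = t]) (auto simp: Part_def ts)
  hence "card (s ` {x \<in> Part n m u i. A n m y x}) = card {x \<in> Part n m u i. A n m y x}"
    by (rule card_image)
  thus ?thesis using img by simp
qed

lemma hr_general:
  assumes n: "2 \<le> n" and nm: "n \<le> m" and not22: "\<not> (n = 2 \<and> m = 2)"
  shows "highly_regular (V n m) (A n m)"
proof -
  define K where "K = n div 2 + 1"
  define M where "M = K * (m div 2 + 1)"
  define y0 where "y0 = (\<lambda>j. SOME y. y \<in> Part n m (0,0) j)"
  define c where "c = (\<lambda>i j. card {x \<in> Part n m (0,0) i. A n m (y0 j) x})"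
  have fin: "finite (V n m)" unfolding torus_verts_def box_verts_def cycle_verts_def by simp
  have cardV: "card (V n m) = n * m" unfolding torus_verts_def box_verts_def cycle_verts_def
    by (simp add: card_cartesian_product)
  have K1: "K \<le> n" using n unfolding K_def by simp
  have "m div 2 + 1 < m" using n nm not22 by presburger
  hence Mlt: "M < n * m" unfolding M_def using K1 n
    by (metis le_less_trans mult_le_mono1 mult_less_cancel1 not_numeral_le_zero order_less_le_trans
        le_zero_eq zero_less_iff_neq_zero)
  have M2: "2 \<le> M" unfolding M_def K_def using n nm by (simp add: mult_le_mono)
  have nonempty: "Part n m u i \<noteq> {}" if u: "u \<in> V n m" and i: "i \<in> {1..M}" for u i
  proof -
    define a where "a = (i - 1) mod K"
    define b where "b = (i - 1) div K"
    have K0: "0 < K" unfolding K_def by simp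
    have a: "a \<le> n div 2" unfolding a_def K_def by (metis K_def K0 Suc_eq_plus1 less_Suc_eq_le mod_less_divisor)
    have "i - 1 < K * (m div 2 + 1)" using i unfolding M_def by auto
    hence b: "b \<le> m div 2" unfolding b_def using K0
      by (metis Suc_eq_plus1 less_Suc_eq_le less_mult_imp_div_less mult.commute)
    have iab: "i = 1 + a + K * b" using i unfolding a_def b_def by auto
    define x where "x = (if fst u + a < n then fst u + a else fst u + a - n,
                         if snd u + b < m then snd u + b else snd u + b - m)"
    have "x \<in> V n m" using u a b n nm unfolding x_def V_iff by auto
    moreover have "idx n m u x = i"
      using u a b cd_surj unfolding iab idx_def x_def V_iff K_def by simp
    ultimately show ?thesis unfolding Part_def by blast
  qed
  have hp: "\<exists>P. P 1 = {u} \<and> (\<forall>i\<in>{1..M}. P i \<noteq> {} \<and> P i \<subseteq> V n m) \<and>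
            (\<forall>i\<in>{1..M}. \<forall>j\<in>{1..M}. i \<noteq> j \<longrightarrow> P i \<inter> P j = {}) \<and>
            (\<Union>i\<in>{1..M}. P i) = V n m \<and>
            (\<forall>i\<in>{1..M}. \<forall>j\<in>{1..M}. \<forall>y\<in>P j. card {x \<in> P i. A n m y x} = c i j)"
    if u: "u \<in> V n m" for u
  proof (intro exI[of _ "Part n m u"] conjI ballI impI)
    show "Part n m u 1 = {u}"
    proof (intro equalityI subsetI)
      fix x assume "x \<in> Part n m u 1"
      hence x: "x \<in> V n m" "cd n (fst u) (fst x) = 0" "cd m (snd u) (snd x) = 0"
        unfolding Part_def idx_def by auto
      thus "x \<in> {u}" using u cd_zero unfolding V_iff by (metis prod_eq_iff singleton_iff)
    next
      fix x assume "x \<in> {u}" thus "x \<in> Part n m u 1" using u unfolding Part_def idx_def by (simp add: cd_def)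
    qed
  next
    fix i assume "i \<in> {1..M}"
    thus "Part n m u i \<noteq> {}" using nonempty u by blast
    show "Part n m u i \<subseteq> V n m" by (auto simp: Part_def)
  next
    fix i j :: nat assume "i \<noteq> j" thus "Part n m u i \<inter> Part n m u j = {}" by (auto simp: Part_def)
  next
    show "(\<Union>i\<in>{1..M}. Part n m u i) = V n m"
    proof (intro equalityI subsetI)
      fix x assume x: "x \<in> V n m"
      have a: "cd n (fst u) (fst x) \<le> n div 2" and b: "cd m (snd u) (snd x) \<le> m div 2"
        using cd_bound u x by (auto simp: V_iff)
      have "idx n m u x = 1 + cd n (fst u) (fst x) + K * cd m (snd u) (snd x)"
        unfolding idx_def K_def by simp
      also have "\<dots> \<le> K + K * cd m (snd u) (snd x)" using a unfolding K_def by simp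
      also have "\<dots> = K * (cd m (snd u) (snd x) + 1)" by simp
      also have "\<dots> \<le> K * (m div 2 + 1)" using b by (intro mult_le_mono2) simp
      finally have "idx n m u x \<le> M" unfolding M_def .
      hence "idx n m u x \<in> {1..M}" by (simp add: idx_def)
      thus "x \<in> (\<Union>i\<in>{1..M}. Part n m u i)" using x by (auto simp: Part_def)
    qed (auto simp: Part_def)
  next
    fix i j y assume i: "i \<in> {1..M}" and j: "j \<in> {1..M}" and y: "y \<in> Part n m u j"
    have "(0,0) \<in> V n m" using n nm by (simp add: V_iff)
    hence "Part n m (0,0) j \<noteq> {}" using nonempty j by blast
    hence "y0 j \<in> Part n m (0,0) j" unfolding y0_def by (simp add: some_in_eq)
    thus "card {x \<in> Part n m u i. A n m y x} = c i j"
      unfolding c_def using equitable[OF u y] by blast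
  qed
  show ?thesis unfolding highly_regular_def
  proof (intro conjI exI[of _ M] exI[of _ c] ballI)
    show "finite (V n m)" by (rule fin)
    show "2 \<le> M" by (rule M2)
    show "M < card (V n m) \<or> (M = card (V n m) \<and> card (V n m) = 2)" using Mlt cardV by simp
  next
    fix u assume "u \<in> V n m" thus "\<exists>P. P 1 = {u} \<and> (\<forall>i\<in>{1..M}. P i \<noteq> {} \<and> P i \<subseteq> V n m) \<and>
            (\<forall>i\<in>{1..M}. \<forall>j\<in>{1..M}. i \<noteq> j \<longrightarrow> P i \<inter> P j = {}) \<and>
            (\<Union>i\<in>{1..M}. P i) = V n m \<and>
            (\<forall>i\<in>{1..M}. \<forall>j\<in>{1..M}. \<forall>y\<in>P j. card {x \<in> P i. A n m y x} = c i j)"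
      by (rule hp)
  qed
qed



lemma sep_insert: "{x \<in> insert a B. P x} = (if P a then insert a {x \<in> B. P x} else {x \<in> B. P x})"
  by auto
lemma sep_empty: "{x \<in> {}. P x} = {}" by auto

lemma V22: "V 2 2 = {(0,0),(0,1),(1,0),(1,1)}"
  by (auto simp: V_iff less_Suc_eq)

lemma adj2: "cycle_adj 2 i j \<longleftrightarrow> (i = 0 \<and> j = 1) \<or> (i = 1 \<and> j = 0)"
  unfolding adj_sc sc_def by auto

definition idx2 where "idx2 u x = 1 + cd 2 (fst u) (fst x) + cd 2 (snd u) (snd x)"
definition c2 :: "nat \<Rightarrow> nat \<Rightarrow> nat" where
  "c2 i j = (if j = 2 \<and> i \<noteq> 2 then 1 else if i = 2 \<and> j \<noteq> 2 then 2 else 0)"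

lemma flt: "{x \<in> set xs. P x} = set (filter P xs)" by auto

lemma V22L: "V 2 2 = set [(0,0),(0,1),(1,0),(1,1)]"
  by (simp add: V22)



definition "L22 = [(0::nat,0::nat),(0,1),(1,0),(1,1)]"
definition "PP u i = set (filter (\<lambda>x. idx2 u x = i) L22)"

lemma PP_case: "u \<in> set L22 \<Longrightarrow> PP u 1 = {u} \<and> (\<forall>i\<in>{1,2,3}. PP u i \<noteq> {}) \<and>
   (\<forall>i\<in>{1,2,3}. \<forall>j\<in>{1,2,3}. \<forall>y\<in>PP u j. card {x \<in> PP u i. A 2 2 y x} = c2 i j)"
  unfolding L22_def
  apply (simp only: set_simps insert_iff empty_iff)
  apply (elim disjE)
  apply (simp_all only: ball_simps(5,7) simp_thms PP_def flt)
  by (simp_all add: PP_def L22_def flt idx2_def cd_def A_iff adj2 c2_def card_set del: set_filter)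

lemma hr22: "highly_regular (V 2 2) (A 2 2)"
  unfolding highly_regular_def
proof (intro conjI exI[of _ 3] exI[of _ c2] ballI)
  show "finite (V 2 2)" by (simp add: V22)
  show "(2::nat) \<le> 3" by simp
  show "3 < card (V 2 2) \<or> (3 = card (V 2 2) \<and> card (V 2 2) = 2)" by (simp add: V22)
next
  fix u assume u: "u \<in> V 2 2"
  have VL: "V 2 2 = set L22" by (simp add: V22 L22_def)
  have i3: "{1..3::nat} = {1,2,3}" by auto
  have sub: "\<And>i. PP u i \<subseteq> V 2 2" unfolding PP_def VL by auto
  have dis: "\<And>i j. i \<noteq> j \<Longrightarrow> PP u i \<inter> PP u j = {}" unfolding PP_def by auto
  have rng: "idx2 u x \<in> {1..3}" if x: "x \<in> V 2 2" for x
  proof -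
    have "cd 2 (fst u) (fst x) \<le> 2 div 2" "cd 2 (snd u) (snd x) \<le> 2 div 2"
      using cd_bound[of "fst u" 2 "fst x"] cd_bound[of "snd u" 2 "snd x"] u x by (auto simp: V_iff)
    thus ?thesis unfolding idx2_def by simp
  qed
  have un: "(\<Union>i\<in>{1..3}. PP u i) = V 2 2"
  proof (intro equalityI subsetI)
    fix x assume "x \<in> V 2 2" thus "x \<in> (\<Union>i\<in>{1..3}. PP u i)"
      using rng[of x] unfolding PP_def VL by auto
  qed (use sub in auto)
  show "\<exists>P. P 1 = {u} \<and> (\<forall>i\<in>{1..3}. P i \<noteq> {} \<and> P i \<subseteq> V 2 2) \<and>
            (\<forall>i\<in>{1..3}. \<forall>j\<in>{1..3}. i \<noteq> j \<longrightarrow> P i \<inter> P j = {}) \<and>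
            (\<Union>i\<in>{1..3}. P i) = V 2 2 \<and>
            (\<forall>i\<in>{1..3}. \<forall>j\<in>{1..3}. \<forall>y\<in>P j. card {x \<in> P i. A 2 2 y x} = c2 i j)"
    apply (rule exI[of _ "PP u"])
    using PP_case[of u] u sub dis un unfolding VL i3 by blast
qed



lemma gd_set: "2 \<le> n \<Longrightarrow> 2 \<le> m \<Longrightarrow> u \<in> V n m \<Longrightarrow>
  {w \<in> V n m. Q w (gdist (V n m) (A n m) u w)} = {w \<in> V n m. Q w (DD n m w u)}"
  by (intro Collect_cong) (metis gdist_eq)

lemma S1: "2 \<le> n \<Longrightarrow> 5 \<le> m \<Longrightarrow>
  {w \<in> V n m. A n m (0,2) w \<and> DD n m w (0,0) + 1 = 2} = {(0,1)}"
proof (intro equalityI subsetI)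
  fix w assume a: "2 \<le> n" "5 \<le> m" and "w \<in> {w \<in> V n m. A n m (0,2) w \<and> DD n m w (0,0) + 1 = 2}"
  then obtain p q where w: "w = (p,q)" "p < n" "q < m" "A n m (0,2) (p,q)" "DD n m (p,q) (0,0) = 1"
    by (cases w) (auto simp: V_iff)
  from w(4) have "(p = 0 \<and> cycle_adj m 2 q) \<or> (q = 2 \<and> cycle_adj n 0 p)" by (simp add: A_iff)
  thus "w \<in> {(0,1)}"
  proof
    assume h: "p = 0 \<and> cycle_adj m 2 q"
    hence "q = 3 \<or> q = 1" using a unfolding adj_sc sc_def by (auto split: if_splits)
    moreover have "cd m 3 0 \<noteq> 1" using a unfolding cd_def by simp
    ultimately show ?thesis using w h by (auto simp: DD_def cd_def)
  next
    assume h: "q = 2 \<and> cycle_adj n 0 p"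
    have "cd m 2 0 = 2" using a unfolding cd_def by simp
    thus ?thesis using w h by (simp add: DD_def)
  qed
next
  fix w assume a: "2 \<le> n" "5 \<le> m" and "w \<in> {(0::nat,1::nat)}"
  hence w: "w = (0,1)" by simp
  have "cycle_adj m 2 1" using a unfolding adj_sc sc_def by simp
  thus "w \<in> {w \<in> V n m. A n m (0,2) w \<and> DD n m w (0,0) + 1 = 2}"
    using a w by (simp add: V_iff A_iff DD_def cd_def)
qed

lemma S2: "2 \<le> n \<Longrightarrow> 5 \<le> m \<Longrightarrow>
  {w \<in> V n m. A n m (1,1) w \<and> DD n m w (0,0) + 1 = 2} = {(0,1),(1,0)}"
proof (intro equalityI subsetI)
  fix w assume a: "2 \<le> n" "5 \<le> m" and "w \<in> {w \<in> V n m. A n m (1,1) w \<and> DD n m w (0,0) + 1 = 2}"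
  then obtain p q where w: "w = (p,q)" "p < n" "q < m" "A n m (1,1) (p,q)" "DD n m (p,q) (0,0) = 1"
    by (cases w) (auto simp: V_iff)
  from w(4) have "(p = 1 \<and> cycle_adj m 1 q) \<or> (q = 1 \<and> cycle_adj n 1 p)" by (auto simp: A_iff)
  thus "w \<in> {(0,1),(1,0)}"
  proof
    assume h: "p = 1 \<and> cycle_adj m 1 q"
    hence "q = 2 \<or> q = 0" using a unfolding adj_sc sc_def by (auto split: if_splits)
    moreover have "cd n 1 0 = 1" "cd m 2 0 = 2" using a unfolding cd_def by simp_all
    ultimately show ?thesis using w h by (auto simp: DD_def)
  next
    assume h: "q = 1 \<and> cycle_adj n 1 p"
    hence "p = 0 \<or> (p = 2 \<and> 3 \<le> n)" using a w unfolding adj_sc sc_def by (auto split: if_splits)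
    moreover have "3 \<le> n \<Longrightarrow> cd n 2 0 \<ge> 1" unfolding cd_def by simp
    moreover have "cd m 1 0 = 1" using a unfolding cd_def by simp
    ultimately show ?thesis using w h by (auto simp: DD_def)
  qed
next
  fix w assume a: "2 \<le> n" "5 \<le> m" and "w \<in> {(0::nat,1::nat),(1,0)}"
  have "cycle_adj m 1 0" "cycle_adj n 1 0" using a unfolding adj_sc sc_def by auto
  moreover have "cd m 1 0 = 1" "cd n 1 0 = 1" "cd n 0 0 = 0" "cd m 0 0 = 0" using a unfolding cd_def by auto
  ultimately show "w \<in> {w \<in> V n m. A n m (1,1) w \<and> DD n m w (0,0) + 1 = 2}"
    using a \<open>w \<in> _\<close> by (auto simp: V_iff A_iff DD_def)
qed

lemma notDR_big:
  assumes n: "2 \<le> n" and nm: "n \<le> m" and m: "5 \<le> m"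
  shows "\<not> distance_regular (V n m) (A n m)"
proof
  assume dr: "distance_regular (V n m) (A n m)"
  have m2: "2 \<le> m" using m by simp
  have uV: "(0,0) \<in> V n m" and vV: "(0,2) \<in> V n m" and v'V: "(1,1) \<in> V n m"
    using n m by (auto simp: V_iff)
  have g1: "gdist (V n m) (A n m) (0,0) (0,2) = 2"
    using gdist_eq[OF n m2 uV vV] m by (simp add: DD_def cd_def)
  have g2: "gdist (V n m) (A n m) (0,0) (1,1) = 2"
    using gdist_eq[OF n m2 uV v'V] n m by (simp add: DD_def cd_def)
  have geq: "gdist (V n m) (A n m) (0,0) (0,2) = gdist (V n m) (A n m) (0,0) (1,1)" using g1 g2 by simp
  note X = dr[unfolded distance_regular_def, THEN conjunct2, rule_format, OF uV vV uV v'V geq]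
  have "card {w \<in> V n m. A n m (0,2) w \<and> gdist (V n m) (A n m) (0,0) w + 1 = 2} =
     card {w \<in> V n m. A n m (1,1) w \<and> gdist (V n m) (A n m) (0,0) w + 1 = 2}"
    using X[THEN conjunct1] unfolding g1 g2 .
  also have "{w \<in> V n m. A n m (0,2) w \<and> gdist (V n m) (A n m) (0,0) w + 1 = 2} = {(0,1)}"
    using gd_set[OF n m2 uV, of "\<lambda>w d. A n m (0,2) w \<and> d + 1 = 2"] S1[OF n m] by simp
  also have "{w \<in> V n m. A n m (1,1) w \<and> gdist (V n m) (A n m) (0,0) w + 1 = 2} = {(0,1),(1,0)}"
    using gd_set[OF n m2 uV, of "\<lambda>w d. A n m (1,1) w \<and> d + 1 = 2"] S2[OF n m] by simp
  finally show False by simp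
qed




lemma lt3: "{..<3::nat} = set [0,1,2]" by (auto simp: numeral_eq_Suc less_Suc_eq)
lemma lt4: "{..<4::nat} = set [0,1,2,3]" by (auto simp: numeral_eq_Suc less_Suc_eq)
lemma lt2: "{..<2::nat} = set [0,1]" by (auto simp: numeral_eq_Suc less_Suc_eq)

lemma V23: "V 2 3 = set (List.product [0,1] [0,1,2])"
  unfolding torus_verts_def box_verts_def cycle_verts_def set_product lt2 lt3 ..
lemma V34: "V 3 4 = set (List.product [0,1,2] [0,1,2,3])"
  unfolding torus_verts_def box_verts_def cycle_verts_def set_product lt3 lt4 ..

lemma notDR_small:
  assumes nm: "(n = 2 \<and> m = 3) \<or> (n = 3 \<and> m = 4)"
  shows "\<not> distance_regular (V n m) (A n m)"
proof
  assume dr: "distance_regular (V n m) (A n m)"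
  have n: "2 \<le> n" and m2: "2 \<le> m" using nm by auto
  have uV: "(0,0) \<in> V n m" and vV: "(1,0) \<in> V n m" and v'V: "(0,1) \<in> V n m"
    using n m2 by (auto simp: V_iff)
  have g1: "gdist (V n m) (A n m) (0,0) (1,0) = 1"
    using gdist_eq[OF n m2 uV vV] n by (simp add: DD_def cd_def)
  have g2: "gdist (V n m) (A n m) (0,0) (0,1) = 1"
    using gdist_eq[OF n m2 uV v'V] m2 by (simp add: DD_def cd_def)
  have geq: "gdist (V n m) (A n m) (0,0) (1,0) = gdist (V n m) (A n m) (0,0) (0,1)" using g1 g2 by simp
  note X = dr[unfolded distance_regular_def, THEN conjunct2, rule_format, OF uV vV uV v'V geq]
  have "card {w \<in> V n m. A n m (1,0) w \<and> gdist (V n m) (A n m) (0,0) w = 1} =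
     card {w \<in> V n m. A n m (0,1) w \<and> gdist (V n m) (A n m) (0,0) w = 1}"
    using X[THEN conjunct2, THEN conjunct1] unfolding g1 g2 .
  hence "card {w \<in> V n m. A n m (1,0) w \<and> DD n m w (0,0) = 1} =
     card {w \<in> V n m. A n m (0,1) w \<and> DD n m w (0,0) = 1}"
    using gd_set[OF n m2 uV, of "\<lambda>w d. A n m (1,0) w \<and> d = 1"]
      gd_set[OF n m2 uV, of "\<lambda>w d. A n m (0,1) w \<and> d = 1"] by simp
  thus False using nm
    apply (elim disjE conjE)
    apply (simp_all only: V23 V34 flt)
    by (simp_all add: A_iff adj_sc sc_def DD_def cd_def card_set del: set_filter)
qed


theorem propositionA1:
  fixes n m :: nat
  assumes "2 \<le> n" and "n \<le> m"
  shows "connected_graph (torus_verts n m) (torus_adj n m) \<and>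
         highly_regular (torus_verts n m) (torus_adj n m) \<and>
         ((n, m) \<notin> {(2,2), (2,4), (3,3), (4,4)} \<longrightarrow>
            \<not> distance_regular (torus_verts n m) (torus_adj n m))"
proof (intro conjI impI)
  have m2: "2 \<le> m" using assms by simp
  show "connected_graph (torus_verts n m) (torus_adj n m)"
    using connected[OF assms(1) m2] .
  show "highly_regular (torus_verts n m) (torus_adj n m)"
  proof (cases "n = 2 \<and> m = 2")
    case True thus ?thesis using hr22 by simp
  next
    case False thus ?thesis using hr_general assms by blast
  qed
  assume ex: "(n, m) \<notin> {(2,2), (2,4), (3,3), (4,4)}"
  show "\<not> distance_regular (torus_verts n m) (torus_adj n m)"
  proof (cases "5 \<le> m")
    case True thus ?thesis using notDR_big assms by blast
  next
    case False
    hence "(n = 2 \<and> m = 3) \<or> (n = 3 \<and> m = 4)" using ex assms by auto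
    thus ?thesis using notDR_small by blast
  qed
qed

end
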